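(* Let $d\in\{1,2\}$, $\nu>0$, $\mu>0$, $\gamma>0$. Then both sequences $(\alpha_k^{(\nu,\gamma)})_{k\ge0}$ and $(c_n^{(\nu,\mu)})_{n\ge0}$ are Hausdorff moment sequences, i.e. each is of the form $s_n=\int_0^1x^n\,d\rho(x)$, $n=0,1,\dots$, for some positive measure $\rho$ on $[0,1]$.
   Context: $\alpha_k^{(\nu,\gamma)}=\frac{\Gamma(k+\frac d2)}{k!\,\Gamma(\frac d2)\Gamma(\nu)}\gamma^{2k}\int_0^{\infty}e^{-a}a^{\nu+\frac d2-1}(a+\gamma^2)^{-k-\frac d2}\,da$ and $c_n^{(\nu,\mu)}=\frac{1}{B(\nu,\mu)}\frac{(\frac d2)_n}{n!}\int_0^1 t^{\mu+\frac d2-1}(1-t)^{\nu+\frac d2-1}(1-t+t^2)^n\,dt$, where $B$ is the Beta function and $(a)_n$ the Pochhammer symbol. *)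

theory Defs
  imports "HOL-Analysis.Analysis"
begin

text \<open>alpha_k^{(nu,gamma)} in dimension d (improper integral over (0,infinity) taken as Lebesgue integral).\<close>
definition alpha_seq :: "nat \<Rightarrow> real \<Rightarrow> real \<Rightarrow> nat \<Rightarrow> real" where
  "alpha_seq d \<nu> \<gamma> k =
     Gamma (real k + real d / 2) / (fact k * Gamma (real d / 2) * Gamma \<nu>) * \<gamma> ^ (2 * k) *
     (LBINT a:{0<..}. exp (- a) * a powr (\<nu> + real d / 2 - 1) *
                      (a + \<gamma>\<^sup>2) powr (- (real k + real d / 2)))"

definition c_seq :: "nat \<Rightarrow> real \<Rightarrow> real \<Rightarrow> nat \<Rightarrow> real" where
  "c_seq d \<nu> \<mu> n =
     1 / Beta \<nu> \<mu> * (pochhammer (real d / 2) n / fact n) *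
     (LBINT t=0..1. t powr (\<mu> + real d / 2 - 1) * (1 - t) powr (\<nu> + real d / 2 - 1) *
                    (1 - t + t\<^sup>2) ^ n)"

definition hausdorff_moment_seq :: "(nat \<Rightarrow> real) \<Rightarrow> bool" where
  "hausdorff_moment_seq s \<longleftrightarrow>
     (\<exists>\<rho> :: real measure. sets \<rho> = sets borel \<and> finite_measure \<rho> \<and>
        emeasure \<rho> (- {0..1}) = 0 \<and>
        (\<forall>n. s n = (\<integral>x. x ^ n \<partial>\<rho>)))"

end

theory Submission
  imports Defs
begin

lemma hms_pushforward:
  fixes M :: "'a measure" and f w :: "'a \<Rightarrow> real" and s :: "nat \<Rightarrow> real"
  assumes f: "f \<in> borel_measurable M" and w: "w \<in> borel_measurable M"
  and fr: "\<And>x. x \<in> space M \<Longrightarrow> f x \<in> {0..1}" and wnn: "\<And>x. x \<in> space M \<Longrightarrow> 0 \<le> w x"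
  and int: "integrable M w"
  and s: "\<And>n. s n = (\<integral>x. w x * f x ^ n \<partial>M)"
  shows "hausdorff_moment_seq s"
  unfolding hausdorff_moment_seq_def
proof (intro exI conjI allI)
  let ?r = "distr (density M (\<lambda>x. ennreal (w x))) borel f"
  show "sets ?r = sets borel" by simp
  have "emeasure ?r (space ?r) = emeasure (density M (\<lambda>x. ennreal (w x))) (space M)"
    using f by (simp add: emeasure_distr)
  also have "\<dots> = (\<integral>\<^sup>+x. ennreal (w x) \<partial>M)"
    using w by (simp add: emeasure_density nn_integral_set_ennreal)
  also have "\<dots> < \<infinity>"
  proof -
    have "(\<integral>\<^sup>+x. ennreal (w x) \<partial>M) = (\<integral>\<^sup>+x. ennreal (norm (w x)) \<partial>M)"
      by (intro nn_integral_cong) (simp add: wnn)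
    thus ?thesis using integrableD(2)[OF int] by (simp add: less_top)
  qed
  finally show "finite_measure ?r" by (intro finite_measureI) simp
  have "f -` (- {0..1}) \<inter> space M = {}" using fr by auto
  then show "emeasure ?r (- {0..1}) = 0"
    using f by (simp add: emeasure_distr)
  fix n
  have "(\<integral>x. x ^ n \<partial>?r) = (\<integral>x. f x ^ n \<partial>density M (\<lambda>x. ennreal (w x)))"
    using f by (intro integral_distr) auto
  also have "\<dots> = (\<integral>x. w x * f x ^ n \<partial>M)"
    using f w wnn by (intro integral_real_density) (auto intro!: AE_I2)
  finally show "s n = (\<integral>x. x ^ n \<partial>?r)" using s by simp
qed

definition clamp01 :: "real \<Rightarrow> real" where "clamp01 x = max 0 (min 1 x)"

lemma clamp01_range: "clamp01 x \<in> {0..1}" by (simp add: clamp01_def)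
lemma clamp01_meas[measurable]: "clamp01 \<in> borel_measurable borel"
  unfolding clamp01_def by measurable

lemma hms_moment_clamp:
  assumes "sets \<rho> = sets borel" "emeasure \<rho> (- {0..1}) = 0"
  shows "(\<integral>x. clamp01 x ^ n \<partial>\<rho>) = (\<integral>x. x ^ n \<partial>\<rho>)"
proof (rule integral_cong_AE)
  have sp: "space \<rho> = UNIV" using sets_eq_imp_space_eq[OF assms(1)] by simp
  have "AE x in \<rho>. x \<in> {0..1}"
    by (rule AE_I[of _ _ "- {0..1}"]) (auto simp: assms sp)
  then show "AE x in \<rho>. clamp01 x ^ n = x ^ n"
    by eventually_elim (simp add: clamp01_def)
  show "(\<lambda>x. clamp01 x ^ n) \<in> borel_measurable \<rho>" "(\<lambda>x. x ^ n) \<in> borel_measurable \<rho>"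
    using assms(1) by (simp_all add: measurable_cong_sets[OF assms(1) refl])
qed

lemma hms_mult:
  assumes "hausdorff_moment_seq s" "hausdorff_moment_seq t"
  shows "hausdorff_moment_seq (\<lambda>n. s n * t n)"
proof -
  obtain \<rho>1 where r1: "sets \<rho>1 = sets borel" "finite_measure \<rho>1" "emeasure \<rho>1 (- {0..1}) = 0"
    "\<And>n. s n = (\<integral>x. x ^ n \<partial>\<rho>1)"
    using assms(1) unfolding hausdorff_moment_seq_def by blast
  obtain \<rho>2 where r2: "sets \<rho>2 = sets borel" "finite_measure \<rho>2" "emeasure \<rho>2 (- {0..1}) = 0"
    "\<And>n. t n = (\<integral>x. x ^ n \<partial>\<rho>2)"
    using assms(2) unfolding hausdorff_moment_seq_def by blast
  interpret F1: finite_measure \<rho>1 by fact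
  interpret F2: finite_measure \<rho>2 by fact
  interpret P: pair_sigma_finite \<rho>1 \<rho>2 ..
  interpret FP: finite_measure "\<rho>1 \<Otimes>\<^sub>M \<rho>2" by (rule finite_measure_pair_measure) fact+
  have sP: "sets (\<rho>1 \<Otimes>\<^sub>M \<rho>2) = sets (borel \<Otimes>\<^sub>M borel)"
    by (intro sets_pair_measure_cong r1(1) r2(1))
  have mP: "\<And>g. g \<in> borel_measurable (borel \<Otimes>\<^sub>M borel) \<Longrightarrow> g \<in> borel_measurable (\<rho>1 \<Otimes>\<^sub>M \<rho>2)"
    by (simp add: measurable_cong_sets[OF sP refl])
  have m1: "\<And>g. g \<in> borel_measurable borel \<Longrightarrow> g \<in> borel_measurable \<rho>1"
    by (simp add: measurable_cong_sets[OF r1(1) refl])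
  have m2: "\<And>g. g \<in> borel_measurable borel \<Longrightarrow> g \<in> borel_measurable \<rho>2"
    by (simp add: measurable_cong_sets[OF r2(1) refl])
  show ?thesis
  proof (rule hms_pushforward[where M="\<rho>1 \<Otimes>\<^sub>M \<rho>2" and f="\<lambda>(x,y). clamp01 x * clamp01 y" and w="\<lambda>_. 1"])
    show "(\<lambda>(x,y). clamp01 x * clamp01 y) \<in> borel_measurable (\<rho>1 \<Otimes>\<^sub>M \<rho>2)"
      by (rule mP) measurable
    show "(\<lambda>_. 1::real) \<in> borel_measurable (\<rho>1 \<Otimes>\<^sub>M \<rho>2)" by simp
    show "(case x of (x, y) \<Rightarrow> clamp01 x * clamp01 y) \<in> {0..1}" for x
      using clamp01_range[of "fst x"] clamp01_range[of "snd x"]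
      by (cases x) (auto intro: mult_le_one)
    show "0 \<le> (1::real)" by simp
    show "integrable (\<rho>1 \<Otimes>\<^sub>M \<rho>2) (\<lambda>_. 1::real)" by simp
    fix n
    have i: "integrable (\<rho>1 \<Otimes>\<^sub>M \<rho>2) (\<lambda>(x,y). clamp01 x ^ n * clamp01 y ^ n)"
    proof (rule FP.integrable_const_bound[where B=1])
      show "AE x in \<rho>1 \<Otimes>\<^sub>M \<rho>2. norm (case x of (x, y) \<Rightarrow> clamp01 x ^ n * clamp01 y ^ n) \<le> 1"
        using clamp01_range by (auto intro!: AE_I2 mult_le_one power_le_one simp: abs_mult)
      show "(\<lambda>(x,y). clamp01 x ^ n * clamp01 y ^ n) \<in> borel_measurable (\<rho>1 \<Otimes>\<^sub>M \<rho>2)"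
        by (rule mP) measurable
    qed
    have "s n * t n = (\<integral>x. clamp01 x ^ n \<partial>\<rho>1) * (\<integral>y. clamp01 y ^ n \<partial>\<rho>2)"
      using r1 r2 by (simp add: hms_moment_clamp)
    also have "\<dots> = (\<integral>x. (\<integral>y. clamp01 x ^ n * clamp01 y ^ n \<partial>\<rho>2) \<partial>\<rho>1)"
      by simp
    also have "\<dots> = (\<integral>(x,y). clamp01 x ^ n * clamp01 y ^ n \<partial>(\<rho>1 \<Otimes>\<^sub>M \<rho>2))"
      by (rule P.integral_fst[OF i])
    also have "\<dots> = (\<integral>z. 1 * (case z of (x,y) \<Rightarrow> clamp01 x * clamp01 y) ^ n \<partial>(\<rho>1 \<Otimes>\<^sub>M \<rho>2))"
      by (intro Bochner_Integration.integral_cong) (auto simp: power_mult_distrib)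
    finally show "s n * t n = (\<integral>z. 1 * (case z of (x,y) \<Rightarrow> clamp01 x * clamp01 y) ^ n \<partial>(\<rho>1 \<Otimes>\<^sub>M \<rho>2))" .
  qed
qed

lemma hms_one: "hausdorff_moment_seq (\<lambda>n. 1)"
proof (rule hms_pushforward[where M=lborel and f="\<lambda>_. 1" and w="indicator {0..1::real}"])
  show "integrable lborel (indicator {0..1::real} :: real \<Rightarrow> real)"
    by (rule integrable_real_indicator) auto
  fix n show "(1::real) = (\<integral>x. indicator {0..1::real} x * 1 ^ n \<partial>lborel)"
    by simp
qed auto

lemma pochhammer_half_eq:
  "pochhammer (1/2::real) n / fact n = Beta (real n + 1/2) (1/2) / pi"
proof -
  have nz: "(1/2::real) \<notin> \<int>\<^sub>\<le>\<^sub>0"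
    using nonpos_Ints_nonpos[of "1/2::real"] by auto
  have P: "pochhammer (1/2::real) n * sqrt pi = Gamma (real n + 1/2)"
    using pochhammer_Gamma[OF nz, of n] by (simp add: Gamma_one_half_real add.commute)
  have F: "Gamma (real n + 1/2 + 1/2) = fact n"
    using Gamma_fact[of n] by (simp add: add.commute)
  show ?thesis
    unfolding Beta_def F Gamma_one_half_real P[symmetric]
    by (simp add: field_simps)
qed

lemma beta_set_integral:
  assumes "a > 0" "b > (0::real)"
  shows "(LINT t:{0..1}|lborel. t powr (a - 1) * (1 - t) powr (b - 1)) = Beta a b"
  using set_borel_integral_eq_integral(2)[OF integrable_Beta[OF assms]]
        integral_unique[OF has_integral_Beta_real[OF assms]] by simp

lemma hms_half: "hausdorff_moment_seq (\<lambda>n. pochhammer (1/2::real) n / fact n)"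
proof (rule hms_pushforward[where M=lborel and f=clamp01 and
      w="\<lambda>t. indicator {0..1} t * (t powr (1/2 - 1) * (1 - t) powr (1/2 - 1)) / pi"])
  show "integrable lborel (\<lambda>t. indicator {0..1} t * (t powr (1/2 - 1) * (1 - t) powr (1/2 - 1)) / pi)"
    using integrable_Beta[of "1/2" "1/2"] unfolding set_integrable_def by simp
  show "(\<lambda>t. indicator {0..1} t * (t powr (1/2 - 1) * (1 - t) powr (1/2 - 1)) / pi) \<in> borel_measurable lborel"
    by measurable
  show "clamp01 \<in> borel_measurable lborel" by measurable
  show "clamp01 x \<in> {0..1}" for x by (rule clamp01_range)
  show "0 \<le> indicator {0..1} t * (t powr (1/2 - 1) * (1 - t) powr (1/2 - 1)) / pi" for t
    by (simp add: indicator_def)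
  fix n
  have "(\<integral>t. indicator {0..1} t * (t powr (1/2 - 1) * (1 - t) powr (1/2 - 1)) / pi * clamp01 t ^ n \<partial>lborel)
     = (\<integral>t. (1/pi) * (indicator {0..1} t *\<^sub>R (t powr ((real n + 1/2) - 1) * (1 - t) powr (1/2 - 1))) \<partial>lborel)"
  proof (intro Bochner_Integration.integral_cong refl)
    fix t :: real
    show "indicator {0..1} t * (t powr (1/2 - 1) * (1 - t) powr (1/2 - 1)) / pi * clamp01 t ^ n
        = (1/pi) * (indicator {0..1} t *\<^sub>R (t powr ((real n + 1/2) - 1) * (1 - t) powr (1/2 - 1)))"
    proof (cases "t \<in> {0<..1}")
      case True
      then have "t powr ((real n + 1/2) - 1) = t ^ n * t powr (1/2 - 1)"
        by (simp add: powr_add[symmetric] powr_realpow[symmetric] algebra_simps)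
      with True show ?thesis by (simp add: clamp01_def indicator_def)
    next
      case False
      then show ?thesis by (cases "t = 0") (auto simp: indicator_def)
    qed
  qed
  also have "\<dots> = (1/pi) * Beta (real n + 1/2) (1/2)"
    using beta_set_integral[of "real n + 1/2" "1/2"]
    by (simp add: set_lebesgue_integral_def)
  finally show "pochhammer (1/2) n / fact n = (\<integral>t. indicator {0..1} t * (t powr (1/2 - 1) * (1 - t) powr (1/2 - 1)) / pi * clamp01 t ^ n \<partial>lborel)"
    by (simp add: pochhammer_half_eq)
qed

lemma hms_poch:
  assumes "d \<in> {1, 2::nat}"
  shows "hausdorff_moment_seq (\<lambda>n. pochhammer (real d / 2) n / fact n)"
  using assms
proof
  assume "d = 1" then show ?thesis using hms_half by simp
next
  assume "d \<in> {2}"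
  then show ?thesis using hms_one by (simp add: pochhammer_fact[symmetric])
qed

lemma gamma_set_integrable:
  assumes "s > (0::real)"
  shows "set_integrable lborel {0<..} (\<lambda>t. t powr (s - 1) / exp t)"
proof -
  have "(\<lambda>t. t powr (s - 1) / exp t) absolutely_integrable_on {0..}"
    by (rule nonnegative_absolutely_integrable_1)
       (use has_integral_integrable[OF Gamma_integral_real[OF assms]] in auto)
  hence "set_integrable lborel {0..} (\<lambda>t. t powr (s - 1) / exp t)"
    unfolding set_integrable_def by (subst (asm) integrable_completion) auto
  thus ?thesis by (rule set_integrable_subset) auto
qed

lemma powr_split_nat:
  assumes "b > (0::real)"
  shows "b powr (-(real k + x)) = b powr (-x) / b ^ k"
proof -
  have e: "-(real k + x) = -x + - real k" by simp
  have "b powr (-(real k + x)) = b powr (-x) * b powr (- real k)"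
    unfolding e by (rule powr_add)
  also have "b powr (- real k) = inverse (b ^ k)"
    using assms by (simp add: powr_minus powr_realpow)
  finally show ?thesis by (simp add: field_simps)
qed

lemma hms_alpha_core:
  assumes x: "x > 0" and nu: "\<nu> > 0" and g: "\<gamma> > (0::real)"
  shows "hausdorff_moment_seq (\<lambda>k. \<gamma> ^ (2 * k) / Gamma \<nu> *
     (LBINT a:{0<..}. exp (- a) * a powr (\<nu> + x - 1) * (a + \<gamma>\<^sup>2) powr (- (real k + x))))"
proof (rule hms_pushforward[where M=lborel and f="\<lambda>a. if 0 < a then \<gamma>\<^sup>2 / (a + \<gamma>\<^sup>2) else 0" and
      w="\<lambda>a. indicator {0<..} a * (exp (- a) * a powr (\<nu> + x - 1) * (a + \<gamma>\<^sup>2) powr (- x) / Gamma \<nu>)"])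
  have Gp: "Gamma \<nu> > 0" using nu by (rule Gamma_real_pos)
  show "(\<lambda>a. if 0 < a then \<gamma>\<^sup>2 / (a + \<gamma>\<^sup>2) else 0) \<in> borel_measurable lborel" by measurable
  show wm: "(\<lambda>a. indicator {0<..} a * (exp (- a) * a powr (\<nu> + x - 1) * (a + \<gamma>\<^sup>2) powr (- x) / Gamma \<nu>))
     \<in> borel_measurable lborel" by measurable
  show "(if 0 < a then \<gamma>\<^sup>2 / (a + \<gamma>\<^sup>2) else 0) \<in> {0..1}" for a
  proof (cases "0 < a")
    case True
    then have "a + \<gamma>\<^sup>2 > 0" using g by (simp add: add_pos_nonneg)
    with True show ?thesis by (simp add: divide_le_eq)
  qed simp
  show "0 \<le> indicator {0<..} a * (exp (- a) * a powr (\<nu> + x - 1) * (a + \<gamma>\<^sup>2) powr (- x) / Gamma \<nu>)" for a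
    using Gp by (simp add: indicator_def)
  show "integrable lborel (\<lambda>a. indicator {0<..} a * (exp (- a) * a powr (\<nu> + x - 1) * (a + \<gamma>\<^sup>2) powr (- x) / Gamma \<nu>))"
  proof (rule Bochner_Integration.integrable_bound[OF _ wm])
    show "integrable lborel (\<lambda>a. (\<gamma>\<^sup>2 powr (- x) / Gamma \<nu>) * (indicator {0<..} a *\<^sub>R (a powr ((\<nu> + x) - 1) / exp a)))"
      using gamma_set_integrable[of "\<nu> + x"] x nu unfolding set_integrable_def
      by (intro integrable_mult_right) simp
    show "AE a in lborel. norm (indicator {0<..} a * (exp (- a) * a powr (\<nu> + x - 1) * (a + \<gamma>\<^sup>2) powr (- x) / Gamma \<nu>))
        \<le> norm ((\<gamma>\<^sup>2 powr (- x) / Gamma \<nu>) * (indicator {0<..} a *\<^sub>R (a powr ((\<nu> + x) - 1) / exp a)))"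
    proof (rule AE_I2)
      fix a :: real
      show "norm (indicator {0<..} a * (exp (- a) * a powr (\<nu> + x - 1) * (a + \<gamma>\<^sup>2) powr (- x) / Gamma \<nu>))
        \<le> norm ((\<gamma>\<^sup>2 powr (- x) / Gamma \<nu>) * (indicator {0<..} a *\<^sub>R (a powr ((\<nu> + x) - 1) / exp a)))"
      proof (cases "a > 0")
        case True
        have "(a + \<gamma>\<^sup>2) powr (- x) \<le> (\<gamma>\<^sup>2) powr (- x)"
          using True g x by (intro powr_mono2') auto
        hence "exp (- a) * a powr (\<nu> + x - 1) * (a + \<gamma>\<^sup>2) powr (- x) / Gamma \<nu>
            \<le> (\<gamma>\<^sup>2 powr (- x) / Gamma \<nu>) * (a powr ((\<nu> + x) - 1) / exp a)"
          using Gp by (simp add: field_simps exp_minus mult_left_mono)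
        with True Gp show ?thesis by (simp add: indicator_def)
      qed (simp add: indicator_def)
    qed
  qed
  fix k
  have "\<gamma> ^ (2 * k) / Gamma \<nu> *
     (LBINT a:{0<..}. exp (- a) * a powr (\<nu> + x - 1) * (a + \<gamma>\<^sup>2) powr (- (real k + x)))
   = (\<integral>a. \<gamma> ^ (2 * k) / Gamma \<nu> * (indicator {0<..} a *\<^sub>R (exp (- a) * a powr (\<nu> + x - 1) * (a + \<gamma>\<^sup>2) powr (- (real k + x)))) \<partial>lborel)"
    by (simp add: set_lebesgue_integral_def)
  also have "\<dots> = (\<integral>a. indicator {0<..} a * (exp (- a) * a powr (\<nu> + x - 1) * (a + \<gamma>\<^sup>2) powr (- x) / Gamma \<nu>) *
        (if 0 < a then \<gamma>\<^sup>2 / (a + \<gamma>\<^sup>2) else 0) ^ k \<partial>lborel)"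
  proof (intro Bochner_Integration.integral_cong refl)
    fix a :: real
    show "\<gamma> ^ (2 * k) / Gamma \<nu> * (indicator {0<..} a *\<^sub>R (exp (- a) * a powr (\<nu> + x - 1) * (a + \<gamma>\<^sup>2) powr (- (real k + x))))
      = indicator {0<..} a * (exp (- a) * a powr (\<nu> + x - 1) * (a + \<gamma>\<^sup>2) powr (- x) / Gamma \<nu>) *
        (if 0 < a then \<gamma>\<^sup>2 / (a + \<gamma>\<^sup>2) else 0) ^ k"
    proof (cases "a > 0")
      case True
      have b: "a + \<gamma>\<^sup>2 > 0" using True g by (simp add: add_pos_nonneg)
      have e1: "(a + \<gamma>\<^sup>2) powr (-(real k + x)) = (a + \<gamma>\<^sup>2) powr (-x) / (a + \<gamma>\<^sup>2) ^ k"
        by (rule powr_split_nat[OF b])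
      have e2: "\<gamma> ^ (2 * k) = (\<gamma>\<^sup>2) ^ k" by (simp add: power_mult)
      show ?thesis using True b unfolding e1 e2
        by (simp add: indicator_def power_divide field_simps)
    qed (simp add: indicator_def)
  qed
  finally show "\<gamma> ^ (2 * k) / Gamma \<nu> *
     (LBINT a:{0<..}. exp (- a) * a powr (\<nu> + x - 1) * (a + \<gamma>\<^sup>2) powr (- (real k + x)))
   = (\<integral>a. indicator {0<..} a * (exp (- a) * a powr (\<nu> + x - 1) * (a + \<gamma>\<^sup>2) powr (- x) / Gamma \<nu>) *
        (if 0 < a then \<gamma>\<^sup>2 / (a + \<gamma>\<^sup>2) else 0) ^ k \<partial>lborel)" .
qed

lemma hms_c_core:
  assumes x: "x > 0" and nu: "\<nu> > 0" and mu: "\<mu> > (0::real)"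
  shows "hausdorff_moment_seq (\<lambda>n. 1 / Beta \<nu> \<mu> *
     (LBINT t=0..1. t powr (\<mu> + x - 1) * (1 - t) powr (\<nu> + x - 1) * (1 - t + t\<^sup>2) ^ n))"
proof (rule hms_pushforward[where M=lborel and f="\<lambda>t. indicator {0..1} t * (1 - t + t * t)" and
      w="\<lambda>t. indicator {0..1} t * (t powr ((\<mu> + x) - 1) * (1 - t) powr ((\<nu> + x) - 1)) / Beta \<nu> \<mu>"])
  have Bp: "Beta \<nu> \<mu> > 0" using nu mu by (simp add: Beta_def Gamma_real_pos)
  show "(\<lambda>t::real. indicator {0..1} t * (1 - t + t * t)) \<in> borel_measurable lborel"
    by (intro borel_measurable_times borel_measurable_indicator) auto
  show "(\<lambda>t. indicator {0..1} t * (t powr ((\<mu> + x) - 1) * (1 - t) powr ((\<nu> + x) - 1)) / Beta \<nu> \<mu>)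
     \<in> borel_measurable lborel" by measurable
  show "(indicator {0..1} t * (1 - t + t * t)) \<in> {0..1}" for t :: real
  proof (cases "t \<in> {0..1}")
    case True
    then have "t * t \<le> t" using mult_left_le[of t t] by simp
    with True show ?thesis by (auto simp: indicator_def)
  qed (auto simp: indicator_def)
  show "0 \<le> indicator {0..1} t * (t powr ((\<mu> + x) - 1) * (1 - t) powr ((\<nu> + x) - 1)) / Beta \<nu> \<mu>" for t
    using Bp by (simp add: indicator_def)
  show "integrable lborel (\<lambda>t. indicator {0..1} t * (t powr ((\<mu> + x) - 1) * (1 - t) powr ((\<nu> + x) - 1)) / Beta \<nu> \<mu>)"
    using integrable_Beta[of "\<mu> + x" "\<nu> + x"] x nu mu unfolding set_integrable_def
    by (intro integrable_divide) simp
  fix n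
  have "(LBINT t=0..1. t powr (\<mu> + x - 1) * (1 - t) powr (\<nu> + x - 1) * (1 - t + t\<^sup>2) ^ n)
      = (LBINT t:{0..1}. t powr (\<mu> + x - 1) * (1 - t) powr (\<nu> + x - 1) * (1 - t + t\<^sup>2) ^ n)"
    using interval_integral_Icc[of "0::real" 1] by (simp add: zero_ereal_def one_ereal_def)
  then have "1 / Beta \<nu> \<mu> * (LBINT t=0..1. t powr (\<mu> + x - 1) * (1 - t) powr (\<nu> + x - 1) * (1 - t + t\<^sup>2) ^ n)
      = (\<integral>t. 1 / Beta \<nu> \<mu> * (indicator {0..1} t *\<^sub>R (t powr (\<mu> + x - 1) * (1 - t) powr (\<nu> + x - 1) * (1 - t + t\<^sup>2) ^ n)) \<partial>lborel)"
    by (simp add: set_lebesgue_integral_def)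
  also have "\<dots> = (\<integral>t. indicator {0..1} t * (t powr ((\<mu> + x) - 1) * (1 - t) powr ((\<nu> + x) - 1)) / Beta \<nu> \<mu> *
       (indicator {0..1} t * (1 - t + t * t)) ^ n \<partial>lborel)"
    by (intro Bochner_Integration.integral_cong refl) (simp add: indicator_def power2_eq_square)
  finally show "1 / Beta \<nu> \<mu> * (LBINT t=0..1. t powr (\<mu> + x - 1) * (1 - t) powr (\<nu> + x - 1) * (1 - t + t\<^sup>2) ^ n)
      = (\<integral>t. indicator {0..1} t * (t powr ((\<mu> + x) - 1) * (1 - t) powr ((\<nu> + x) - 1)) / Beta \<nu> \<mu> *
       (indicator {0..1} t * (1 - t + t * t)) ^ n \<partial>lborel)" .
qed

theorem theorem6:
  fixes d :: nat and \<nu> \<mu> \<gamma> :: real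
  assumes "d \<in> {1, 2}" and "\<nu> > 0" and "\<mu> > 0" and "\<gamma> > 0"
  shows "hausdorff_moment_seq (alpha_seq d \<nu> \<gamma>) \<and> hausdorff_moment_seq (c_seq d \<nu> \<mu>)"
proof
  have x: "real d / 2 > 0" using assms(1) by auto
  have nz: "real d / 2 \<notin> \<int>\<^sub>\<le>\<^sub>0"
    using nonpos_Ints_nonpos[of "real d / 2"] x by auto
  have "alpha_seq d \<nu> \<gamma> = (\<lambda>k. pochhammer (real d / 2) k / fact k * (\<gamma> ^ (2 * k) / Gamma \<nu> *
     (LBINT a:{0<..}. exp (- a) * a powr (\<nu> + real d / 2 - 1) * (a + \<gamma>\<^sup>2) powr (- (real k + real d / 2)))))"
    by (rule ext) (simp add: alpha_seq_def pochhammer_Gamma[OF nz] add.commute mult_ac)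
  then show "hausdorff_moment_seq (alpha_seq d \<nu> \<gamma>)"
    using hms_mult[OF hms_poch[OF assms(1)] hms_alpha_core[OF x assms(2) assms(4)]] by simp
  have "c_seq d \<nu> \<mu> = (\<lambda>n. pochhammer (real d / 2) n / fact n * (1 / Beta \<nu> \<mu> *
     (LBINT t=0..1. t powr (\<mu> + real d / 2 - 1) * (1 - t) powr (\<nu> + real d / 2 - 1) * (1 - t + t\<^sup>2) ^ n)))"
    by (rule ext) (simp add: c_seq_def)
  then show "hausdorff_moment_seq (c_seq d \<nu> \<mu>)"
    using hms_mult[OF hms_poch[OF assms(1)] hms_c_core[OF x assms(2) assms(3)]] by simp
qed

end
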